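(* Let $\mathcal{D}$ be a distribution over $\mathcal{X}\times\mathcal{Y}$ where $\mathcal{Y}\subseteq\mathbb{R}^d$ and $\|y\|_\infty\le M$ for all $y\in\mathcal{Y}$, let $\alpha>0$, and let $\mathcal{T}$ be a bucketing with width $w=\sqrt{\alpha/M}$. If a model $h:\mathcal{X}\to\mathcal{Y}$ is $\alpha$-self-consistent, then \[\left|\mathbb{E}_{\mathcal{D}}[\pi_h(x)\cdot h(x)]-\mathbb{E}_{\mathcal{D}}[\pi_h(x)\cdot y]\right|\le 2d\sqrt{\alpha M}.\]
   Context: $\Omega\subseteq[0,1]^d$ is an arbitrary feasible set of actions; a policy is a map $\pi:\mathcal{X}\to\Omega$. For a model $h:\mathcal{X}\to\mathcal{Y}$, its induced policy is $\pi_h(x)=\arg\max_{a\in\Omega}a\cdot h(x)$. A bucketing $\mathcal{T}$ of width $w$ is a partition of $[0,1]$ into $1/w$ consecutive intervals $\tau$ of width $w$. A model $h$ is $\alpha$-consistent with respect to a collection $\mathcal{C}\subseteq 2^{\mathcal{X}}$ if for every $C\in\mathcal{C}$, $\|\mathbb{E}_{\mathcal{D}}[y-h(x)\mid x\in C]\|_\infty\le \alpha/\Pr[x\in C]$. The level sets of a policy $\pi$ are $\mathcal{C}^{\mathcal{T}}_\pi=\{\{x:\pi(x)_i\in\tau\}:i\in[d],\tau\in\mathcal{T}\}$. The model $h$ is $\alpha$-self-consistent if it is $\alpha$-consistent with respect to $\mathcal{C}^{\mathcal{T}}_{\pi_h}$. *)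

theory Defs
  imports "HOL-Probability.Probability"
begin

definition bucketing :: "real \<Rightarrow> real set set \<Rightarrow> bool" where
  "bucketing w T \<longleftrightarrow> finite T \<and> real (card T) * w = 1 \<and> \<Union>T = {0..1} \<and>
     (\<forall>\<tau>\<in>T. \<forall>\<tau>'\<in>T. \<tau> \<noteq> \<tau>' \<longrightarrow> \<tau> \<inter> \<tau>' = {}) \<and>
     (\<forall>\<tau>\<in>T. \<tau> \<noteq> {} \<and> is_interval \<tau> \<and> Sup \<tau> - Inf \<tau> = w)"

definition induced_policy :: "(real^'d) set \<Rightarrow> ('x \<Rightarrow> real^'d) \<Rightarrow> ('x \<Rightarrow> real^'d) \<Rightarrow> bool" where
  "induced_policy \<Omega> h \<pi> \<longleftrightarrow> (\<forall>x. \<pi> x \<in> \<Omega> \<and> (\<forall>a\<in>\<Omega>. a \<bullet> h x \<le> \<pi> x \<bullet> h x))"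

definition cond_exp :: "('x \<times> 'y) measure \<Rightarrow> ('x \<times> 'y \<Rightarrow> 'b::{banach,second_countable_topology}) \<Rightarrow> 'x set \<Rightarrow> 'b" where
  "cond_exp D f C = (1 / measure D {z \<in> space D. fst z \<in> C}) *\<^sub>R
       (\<integral>z. indicator {z. fst z \<in> C} z *\<^sub>R f z \<partial>D)"

definition consistent :: "real \<Rightarrow> ('x \<times> (real^'d)) measure \<Rightarrow> ('x \<Rightarrow> real^'d) \<Rightarrow> 'x set set \<Rightarrow> bool" where
  "consistent \<alpha> D h \<C> \<longleftrightarrow>
     (\<forall>C\<in>\<C>. infnorm (cond_exp D (\<lambda>z. snd z - h (fst z)) C) \<le> \<alpha> / measure D {z \<in> space D. fst z \<in> C})"

definition level_sets :: "('x \<Rightarrow> real^'d) \<Rightarrow> real set set \<Rightarrow> 'x set set" where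
  "level_sets \<pi> T = {{x. \<pi> x $ i \<in> \<tau>} | i \<tau>. \<tau> \<in> T}"

definition self_consistent :: "real \<Rightarrow> ('x \<times> (real^'d)) measure \<Rightarrow> real set set \<Rightarrow> ('x \<Rightarrow> real^'d) \<Rightarrow> ('x \<Rightarrow> real^'d) \<Rightarrow> bool" where
  "self_consistent \<alpha> D T h \<pi> \<longleftrightarrow> consistent \<alpha> D h (level_sets \<pi> T)"

end

theory Submission
  imports Defs
begin

definition midb :: "real set \<Rightarrow> real" where
  "midb \<tau> = (Sup \<tau> + Inf \<tau>) / 2"

lemma bucketing_D:
  assumes "bucketing w T"
  shows "finite T" "real (card T) * w = 1" "\<Union>T = {0..1}"
    "\<And>\<tau> \<tau>'. \<tau> \<in> T \<Longrightarrow> \<tau>' \<in> T \<Longrightarrow> \<tau> \<noteq> \<tau>' \<Longrightarrow> \<tau> \<inter> \<tau>' = {}"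
    "\<And>\<tau>. \<tau> \<in> T \<Longrightarrow> \<tau> \<noteq> {}"
    "\<And>\<tau>. \<tau> \<in> T \<Longrightarrow> is_interval \<tau>"
    "\<And>\<tau>. \<tau> \<in> T \<Longrightarrow> Sup \<tau> - Inf \<tau> = w"
  using assms unfolding bucketing_def by (elim conjE; simp)+

lemma bucket_mid:
  assumes "bucketing w T" "\<tau> \<in> T" "t \<in> \<tau>"
  shows "\<bar>t - midb \<tau>\<bar> \<le> w / 2" "\<bar>midb \<tau>\<bar> \<le> 1"
proof -
  have sub: "\<tau> \<subseteq> {0..1}" using bucketing_D(3)[OF assms(1)] assms(2) by (metis Union_upper)
  have ne: "\<tau> \<noteq> {}" and wd: "Sup \<tau> - Inf \<tau> = w" using bucketing_D(5,7)[OF assms(1) assms(2)] by auto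
  have bb: "bdd_below \<tau>" "bdd_above \<tau>" using sub
    by (meson atLeastAtMost_iff bdd_above.I bdd_below.I subset_iff)+
  have a: "Inf \<tau> \<le> t" "t \<le> Sup \<tau>" using bb assms(3) by (auto intro: cInf_lower cSup_upper)
  have b: "0 \<le> Inf \<tau>" using ne sub by (intro cInf_greatest) auto
  have c: "Sup \<tau> \<le> 1" using ne sub by (intro cSup_least) auto
  show "\<bar>t - midb \<tau>\<bar> \<le> w / 2"
  proof -
    have "t - midb \<tau> \<le> w/2" unfolding midb_def using a wd by argo
    moreover have "midb \<tau> - t \<le> w/2" unfolding midb_def using a wd by argo
    ultimately show ?thesis by (intro abs_leI) linarith+
  qed
  show "\<bar>midb \<tau>\<bar> \<le> 1"
  proof -
    have "midb \<tau> \<le> 1" unfolding midb_def using a b c by argo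
    moreover have "0 \<le> midb \<tau>" unfolding midb_def using a b c by argo
    ultimately show ?thesis by (intro abs_leI) linarith+
  qed
qed

lemma bucket_unique:
  assumes "bucketing w T" "t \<in> {0..1}"
  shows "\<exists>\<tau>\<in>T. t \<in> \<tau> \<and> (\<forall>\<tau>'\<in>T. t \<in> \<tau>' \<longrightarrow> \<tau>' = \<tau>)"
proof -
  from assms obtain \<tau> where t: "\<tau> \<in> T" "t \<in> \<tau>" using bucketing_D(3)[OF assms(1)] by (metis UnionE)
  have "\<forall>\<tau>'\<in>T. t \<in> \<tau>' \<longrightarrow> \<tau>' = \<tau>"
    using bucketing_D(4)[OF assms(1) _ t(1)] t(2) by (metis disjoint_iff)
  then show ?thesis using t by blast
qed

theorem corollary1:
  fixes D :: "('x \<times> (real^'d)) measure" and Y :: "(real^'d) set"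
    and M \<alpha> w :: real and T :: "real set set" and \<Omega> :: "(real^'d) set"
    and h \<pi> :: "'x \<Rightarrow> real^'d"
  assumes "prob_space D"
    and "\<forall>y\<in>Y. infnorm y \<le> M"
    and "\<forall>z\<in>space D. snd z \<in> Y"
    and "\<forall>x. h x \<in> Y"
    and "\<alpha> > 0"
    and "w = sqrt (\<alpha> / M)"
    and "bucketing w T"
    and "\<forall>a\<in>\<Omega>. \<forall>i. 0 \<le> a $ i \<and> a $ i \<le> 1"
    and "induced_policy \<Omega> h \<pi>"
    and "(\<lambda>z. h (fst z)) \<in> borel_measurable D"
    and "snd \<in> borel_measurable D"
    and "(\<lambda>z. \<pi> (fst z)) \<in> borel_measurable D"
    and "self_consistent \<alpha> D T h \<pi>"
  shows "\<bar>(\<integral>z. \<pi> (fst z) \<bullet> h (fst z) \<partial>D) - (\<integral>z. \<pi> (fst z) \<bullet> snd z \<partial>D)\<bar>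
           \<le> 2 * real CARD('d) * sqrt (\<alpha> * M)"
proof -
  interpret P: prob_space D by fact
  note hm = assms(10) and ym = assms(11) and pm = assms(12)
  have finT: "finite T" and cw: "real (card T) * w = 1" using bucketing_D(1,2)[OF assms(7)] by auto
  have wpos: "w > 0"
  proof (rule ccontr)
    assume "\<not> w > 0"
    then have "real (card T) * w \<le> 0" by (simp add: mult_nonneg_nonpos)
    with cw show False by simp
  qed
  have Mpos: "M > 0" using wpos assms(5,6)
    by (metis divide_le_0_iff less_le not_le real_sqrt_le_0_iff)
  have sM: "sqrt M * sqrt M = M" "sqrt M > 0" using Mpos by simp_all
  have sa: "sqrt \<alpha> * sqrt \<alpha> = \<alpha>" "sqrt \<alpha> > 0" using assms(5) by simp_all
  have w2: "w = sqrt \<alpha> / sqrt M" using assms(6) by (simp add: real_sqrt_divide)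
  have wM: "w * M = sqrt (\<alpha> * M)"
  proof -
    have "w * M = sqrt \<alpha> / sqrt M * (sqrt M * sqrt M)" using w2 sM by simp
    also have "\<dots> = sqrt \<alpha> * sqrt M" using sM(2) by (simp add: field_simps)
    finally show ?thesis by (simp add: real_sqrt_mult)
  qed
  have cT: "real (card T) * \<alpha> = sqrt (\<alpha> * M)"
  proof -
    have "real (card T) = 1 / w" using cw wpos by (simp add: field_simps)
    then have "real (card T) * \<alpha> = sqrt M / sqrt \<alpha> * (sqrt \<alpha> * sqrt \<alpha>)" using w2 sa by simp
    also have "\<dots> = sqrt \<alpha> * sqrt M" using sa(2) by (simp add: field_simps)
    finally show ?thesis by (simp add: real_sqrt_mult)
  qed
  have Pi01: "\<And>x i. 0 \<le> \<pi> x $ i \<and> \<pi> x $ i \<le> 1"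
    using assms(8,9) unfolding induced_policy_def by blast
  have yb: "\<And>z i. z \<in> space D \<Longrightarrow> \<bar>snd z $ i\<bar> \<le> M"
    using assms(2,3) component_le_infnorm_cart order_trans by blast
  have hb: "\<And>x i. \<bar>h x $ i\<bar> \<le> M"
    using assms(2,4) component_le_infnorm_cart order_trans by blast
  have eb: "\<bar>h (fst z) $ i - snd z $ i\<bar> \<le> 2 * M" if "z \<in> space D" for z i
    using yb[OF that, of i] hb[of "fst z" i] by linarith
  have mP[measurable]: "\<And>i. (\<lambda>z. \<pi> (fst z) $ i) \<in> borel_measurable D"
    using measurable_compose[OF pm borel_measurable_nth] by simp
  have mH[measurable]: "\<And>i. (\<lambda>z. h (fst z) $ i) \<in> borel_measurable D"
    using measurable_compose[OF hm borel_measurable_nth] by simp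
  have mY[measurable]: "\<And>i. (\<lambda>z. snd z $ i) \<in> borel_measurable D"
    using measurable_compose[OF ym borel_measurable_nth] by simp
  have intb: "integrable D f" if "f \<in> borel_measurable D" "\<And>z. z \<in> space D \<Longrightarrow> \<bar>f z\<bar> \<le> B"
    for f :: "_ \<Rightarrow> real" and B
    by (rule P.integrable_const_bound[where B=B]) (use that in auto)
  have pb: "\<bar>\<pi> x $ i * c\<bar> \<le> \<bar>c\<bar>" for x i c
  proof -
    have "\<bar>\<pi> x $ i\<bar> \<le> 1" using Pi01[of x i] by auto
    then have "\<bar>\<pi> x $ i\<bar> * \<bar>c\<bar> \<le> 1 * \<bar>c\<bar>" by (rule mult_right_mono) simp
    then show ?thesis by (simp add: abs_mult)
  qed
  have ib: "\<bar>indicator A t * c\<bar> \<le> \<bar>c\<bar>" for A t and c :: real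
    by (simp add: indicator_def)
  have Tb: "\<tau> \<in> sets borel" if "\<tau> \<in> T" for \<tau>
    using bucketing_D(6)[OF assms(7) that] by (rule real_interval_borel_measurable)
  have key: "\<bar>\<integral>z. indicator \<tau> (\<pi> (fst z) $ i) * (h (fst z) $ i - snd z $ i) \<partial>D\<bar> \<le> \<alpha>"
    if tT: "\<tau> \<in> T" for \<tau> i
  proof -
    note tb[measurable] = Tb[OF tT]
    note [measurable] = hm ym
    define C where "C = {x. \<pi> x $ i \<in> \<tau>}"
    have CL: "C \<in> level_sets \<pi> T" unfolding level_sets_def C_def using tT by blast
    define f where "f z = indicator {z. fst z \<in> C} z *\<^sub>R (snd z - h (fst z))" for z
    define v where "v = (\<integral>z. f z \<partial>D)"
    define Pm where "Pm = measure D {z \<in> space D. fst z \<in> C}"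
    have cons: "infnorm ((1 / Pm) *\<^sub>R v) \<le> \<alpha> / Pm"
      using assms(13) CL unfolding self_consistent_def consistent_def cond_exp_def v_def f_def Pm_def
      by blast
    have ind_eq: "indicator {z. fst z \<in> C} z = (indicator \<tau> (\<pi> (fst z) $ i) :: real)" for z
      by (simp add: indicator_def C_def)
    have fm: "f \<in> borel_measurable D" unfolding f_def ind_eq by measurable
    have fb: "norm (f z) \<le> sqrt DIM(real^'d) * M + sqrt DIM(real^'d) * M" if "z \<in> space D" for z
    proof -
      have "norm (f z) \<le> norm (snd z - h (fst z))" unfolding f_def by (simp add: indicator_def)
      also have "\<dots> \<le> norm (snd z) + norm (h (fst z))" by (rule norm_triangle_ineq4)
      also have "\<dots> \<le> sqrt DIM(real^'d) * M + sqrt DIM(real^'d) * M"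
      proof (rule add_mono)
        show "norm (snd z) \<le> sqrt DIM(real^'d) * M"
          using norm_le_infnorm[of "snd z"] assms(2,3) that
          by (meson mult_left_mono order_trans real_sqrt_ge_zero of_nat_0_le_iff)
        show "norm (h (fst z)) \<le> sqrt DIM(real^'d) * M"
          using norm_le_infnorm[of "h (fst z)"] assms(2,4)
          by (meson mult_left_mono order_trans real_sqrt_ge_zero of_nat_0_le_iff)
      qed
      finally show ?thesis .
    qed
    have fint: "integrable D f"
      by (rule P.integrable_const_bound[OF AE_I2[OF fb] fm])
    have "v $ i = (\<integral>z. f z $ i \<partial>D)"
      unfolding v_def cart_eq_inner_axis using fint by simp
    also have "(\<lambda>z. f z $ i) = (\<lambda>z. - (indicator \<tau> (\<pi> (fst z) $ i) * (h (fst z) $ i - snd z $ i)))"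
      by (auto simp: f_def ind_eq fun_eq_iff algebra_simps)
    finally have vi: "(\<integral>z. indicator \<tau> (\<pi> (fst z) $ i) * (h (fst z) $ i - snd z $ i) \<partial>D) = - v $ i"
      by simp
    have "Pm \<ge> 0" unfolding Pm_def by simp
    then consider "Pm > 0" | "Pm = 0" by linarith
    then show ?thesis
    proof cases
      case 1
      have "(1 / Pm) * infnorm v \<le> \<alpha> / Pm" using cons 1 by (simp add: infnorm_mul)
      then have "infnorm v \<le> \<alpha>" using 1 by (simp add: field_simps)
      then show ?thesis unfolding vi using component_le_infnorm_cart[of v i] by simp
    next
      case 2
      have Nm: "{z \<in> space D. fst z \<in> C} \<in> sets D" unfolding C_def by measurable
      have Nn: "{z \<in> space D. fst z \<in> C} \<in> null_sets D"
        using Nm 2 unfolding Pm_def by (simp add: null_sets_def P.emeasure_eq_measure)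
      have "AE z in D. indicator \<tau> (\<pi> (fst z) $ i) * (h (fst z) $ i - snd z $ i) = 0"
        by (rule AE_I'[OF Nn]) (auto simp: C_def indicator_def)
      then have "(\<integral>z. indicator \<tau> (\<pi> (fst z) $ i) * (h (fst z) $ i - snd z $ i) \<partial>D) = 0"
        by (rule integral_eq_zero_AE)
      then show ?thesis using assms(5) by simp
    qed
  qed
  have per_i: "\<bar>\<integral>z. \<pi> (fst z) $ i * (h (fst z) $ i - snd z $ i) \<partial>D\<bar> \<le> 2 * sqrt (\<alpha> * M)" for i
  proof -
    define e where "e z = h (fst z) $ i - snd z $ i" for z
    define g where "g (z::'x \<times> (real^'d)) = (\<Sum>\<tau>\<in>T. midb \<tau> * indicator \<tau> (\<pi> (fst z) $ i))" for z
    have em[measurable]: "e \<in> borel_measurable D" unfolding e_def by measurable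
    have ebd: "\<bar>e z\<bar> \<le> 2 * M" if "z \<in> space D" for z unfolding e_def using eb[OF that] .
    have gval: "\<bar>\<pi> (fst z) $ i - g z\<bar> \<le> w / 2" for z
    proof -
      have "\<pi> (fst z) $ i \<in> {0..1}" using Pi01 by auto
      from bucket_unique[OF assms(7) this] obtain \<tau>0 where
        t0: "\<tau>0 \<in> T" "\<pi> (fst z) $ i \<in> \<tau>0" and un: "\<forall>\<tau>'\<in>T. \<pi> (fst z) $ i \<in> \<tau>' \<longrightarrow> \<tau>' = \<tau>0"
        by blast
      have "g z = (\<Sum>\<tau>\<in>T. if \<tau> = \<tau>0 then midb \<tau> else 0)"
        unfolding g_def
      proof (rule sum.cong[OF refl])
        fix \<tau> assume tT: "\<tau> \<in> T"
        show "midb \<tau> * indicator \<tau> (\<pi> (fst z) $ i) = (if \<tau> = \<tau>0 then midb \<tau> else 0)"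
        proof (cases "\<tau> = \<tau>0")
          case True then show ?thesis using t0 by simp
        next
          case False
          then have "\<pi> (fst z) $ i \<notin> \<tau>" using un tT by blast
          then show ?thesis using False by simp
        qed
      qed
      also have "\<dots> = midb \<tau>0" using t0 finT by simp
      finally show ?thesis using bucket_mid(1)[OF assms(7) t0] by simp
    qed
    have ie: "integrable D (\<lambda>z. indicator \<tau> (\<pi> (fst z) $ i) * e z)" if "\<tau> \<in> T" for \<tau>
    proof -
      note [measurable] = Tb[OF that]
      show ?thesis by (rule intb[of _ "2 * M"]) (measurable, meson ib ebd order_trans)
    qed
    have ipe: "integrable D (\<lambda>z. \<pi> (fst z) $ i * e z)"
      by (rule intb[of _ "2 * M"]) (measurable, meson pb ebd order_trans)
    have geq: "(\<lambda>z::'x \<times> (real^'d). g z * e z) = (\<lambda>z::'x \<times> (real^'d). \<Sum>\<tau>\<in>T. midb \<tau> * (indicator \<tau> (\<pi> (fst z) $ i) * e z))"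
      unfolding g_def by (simp add: sum_distrib_right mult.assoc)
    have ige: "integrable D (\<lambda>z. g z * e z)"
      unfolding geq using ie by (intro Bochner_Integration.integrable_sum Bochner_Integration.integrable_mult_right) auto
    have intg: "(\<integral>z. g z * e z \<partial>D) = (\<Sum>\<tau>\<in>T. midb \<tau> * (\<integral>z. indicator \<tau> (\<pi> (fst z) $ i) * e z \<partial>D))"
      unfolding geq using ie by (subst Bochner_Integration.integral_sum) auto
    have b1: "\<bar>\<integral>z. g z * e z \<partial>D\<bar> \<le> real (card T) * \<alpha>"
    proof -
      have "\<bar>\<integral>z. g z * e z \<partial>D\<bar> \<le> (\<Sum>\<tau>\<in>T. \<bar>midb \<tau> * (\<integral>z. indicator \<tau> (\<pi> (fst z) $ i) * e z \<partial>D)\<bar>)"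
        unfolding intg by (rule sum_abs)
      also have "\<dots> \<le> (\<Sum>\<tau>\<in>T. \<alpha>)"
      proof (rule sum_mono)
        fix \<tau> assume tT: "\<tau> \<in> T"
        obtain t where "t \<in> \<tau>" using bucketing_D(5)[OF assms(7) tT] by blast
        then have m1: "\<bar>midb \<tau>\<bar> \<le> 1" using bucket_mid(2)[OF assms(7) tT] by blast
        have k: "\<bar>\<integral>z. indicator \<tau> (\<pi> (fst z) $ i) * e z \<partial>D\<bar> \<le> \<alpha>"
          using key[OF tT, of i] unfolding e_def .
        have "\<bar>midb \<tau>\<bar> * \<bar>\<integral>z. indicator \<tau> (\<pi> (fst z) $ i) * e z \<partial>D\<bar> \<le> 1 * \<alpha>"
          by (rule mult_mono[OF m1 k]) auto
        then show "\<bar>midb \<tau> * (\<integral>z. indicator \<tau> (\<pi> (fst z) $ i) * e z \<partial>D)\<bar> \<le> \<alpha>"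
          by (simp add: abs_mult)
      qed
      finally show ?thesis by simp
    qed
    have b2: "\<bar>\<integral>z. \<pi> (fst z) $ i * e z - g z * e z \<partial>D\<bar> \<le> w * M"
    proof -
      have "\<bar>\<integral>z. \<pi> (fst z) $ i * e z - g z * e z \<partial>D\<bar> \<le> (\<integral>z. \<bar>\<pi> (fst z) $ i * e z - g z * e z\<bar> \<partial>D)"
        by (rule integral_abs_bound)
      also have "\<dots> \<le> (\<integral>z. w * M \<partial>D)"
      proof (rule integral_mono)
        show "integrable D (\<lambda>z. \<bar>\<pi> (fst z) $ i * e z - g z * e z\<bar>)" using ipe ige by auto
        show "integrable D (\<lambda>z. w * M)" by simp
        fix z assume z: "z \<in> space D"
        have "\<bar>\<pi> (fst z) $ i * e z - g z * e z\<bar> = \<bar>\<pi> (fst z) $ i - g z\<bar> * \<bar>e z\<bar>"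
          by (simp add: abs_mult left_diff_distrib[symmetric])
        also have "\<dots> \<le> (w / 2) * (2 * M)"
          by (rule mult_mono[OF gval ebd[OF z]]) (use wpos in auto)
        finally show "\<bar>\<pi> (fst z) $ i * e z - g z * e z\<bar> \<le> w * M" by simp
      qed
      also have "\<dots> = w * M" using P.prob_space by simp
      finally show ?thesis .
    qed
    have "(\<integral>z. \<pi> (fst z) $ i * e z \<partial>D) = (\<integral>z. g z * e z \<partial>D) + (\<integral>z. \<pi> (fst z) $ i * e z - g z * e z \<partial>D)"
      using ipe ige by simp
    then have "\<bar>\<integral>z. \<pi> (fst z) $ i * e z \<partial>D\<bar> \<le> real (card T) * \<alpha> + w * M"
      using b1 b2 by linarith
    then show ?thesis unfolding e_def cT wM by simp
  qed
  have split: "(\<integral>z. \<pi> (fst z) \<bullet> h (fst z) \<partial>D) - (\<integral>z. \<pi> (fst z) \<bullet> snd z \<partial>D)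
      = (\<Sum>i\<in>UNIV. \<integral>z. \<pi> (fst z) $ i * (h (fst z) $ i - snd z $ i) \<partial>D)"
  proof -
    have i1: "integrable D (\<lambda>z. \<pi> (fst z) $ i * h (fst z) $ i)" for i
      by (rule intb[of _ M]) (measurable, meson pb hb order_trans)
    have i2: "integrable D (\<lambda>z. \<pi> (fst z) $ i * snd z $ i)" for i
      by (rule intb[of _ M]) (measurable, meson pb yb order_trans)
    have "(\<integral>z. \<pi> (fst z) \<bullet> h (fst z) \<partial>D) = (\<Sum>i\<in>UNIV. \<integral>z. \<pi> (fst z) $ i * h (fst z) $ i \<partial>D)"
      unfolding inner_vec_def by (simp add: Bochner_Integration.integral_sum[OF i1])
    moreover have "(\<integral>z. \<pi> (fst z) \<bullet> snd z \<partial>D) = (\<Sum>i\<in>UNIV. \<integral>z. \<pi> (fst z) $ i * snd z $ i \<partial>D)"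
      unfolding inner_vec_def by (simp add: Bochner_Integration.integral_sum[OF i2])
    moreover have "(\<integral>z. \<pi> (fst z) $ i * (h (fst z) $ i - snd z $ i) \<partial>D)
       = (\<integral>z. \<pi> (fst z) $ i * h (fst z) $ i \<partial>D) - (\<integral>z. \<pi> (fst z) $ i * snd z $ i \<partial>D)" for i
      using i1[of i] i2[of i] by (simp add: right_diff_distrib)
    ultimately show ?thesis by (simp add: sum_subtractf)
  qed
  have "\<bar>\<Sum>i\<in>UNIV. \<integral>z. \<pi> (fst z) $ i * (h (fst z) $ i - snd z $ i) \<partial>D\<bar>
      \<le> (\<Sum>i\<in>(UNIV::'d set). 2 * sqrt (\<alpha> * M))"
    by (rule order_trans[OF sum_abs sum_mono]) (rule per_i)
  then show ?thesis unfolding split by simp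
qed

end
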